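(* Let $\mathfrak M$ be a relational structure with domain $\Sigma$. For every $n\ge1$ and every relation $R\subseteq(\Sigma^* )^n$, $R$ is $MSO(\mathfrak M)$-definable if and only if $R$ is $\mathfrak M$-recognizable.
   Context: Let $\mathfrak L$ be a relational language and $\mathfrak M$ an $\mathfrak L$-structure with domain $\Sigma$ (finite or infinite). Let $\#\notin\Sigma$ and let $\mathfrak M_\#$ be the structure in the language $\mathfrak L_\#=\mathfrak L\cup\{P_\#\}$ with domain $\Sigma\cup\{\#\}$, every symbol of $\mathfrak L$ interpreted as in $\mathfrak M$ and $P_\#(x)$ holding iff $x=\#$. For $w=(w_1,\dots,w_n)\in(\Sigma^* )^n$, $\langle w\rangle$ denotes the word over $(\Sigma\cup\{\#\})^n$ of length $\max_i|w_i|$ obtained by padding each $w_i$ on the right with $\#$'s and reading them in parallel; $\pi_j(\langle w\rangle)$ is its $j$-th component and $u[i]$ the $i$-th letter of a word $u$ (starting at $0$). $\mathfrak M$-automata: an $\mathfrak M$-automaton with $n$ tapes is $(Q,n,E,I,T)$ with $Q$ a finite set of states, $I,T\subseteq Q$, and $E\subseteq Q\times\mathcal F_n\times Q$ a finite set of transitions, $\mathcal F_n$ the set of first-order $\mathfrak L_\#$-formulas with $n$ free variables; $w$ is accepted if there are states $q_0\in I,\dots,q_m\in T$ ($m=|\langle w\rangle|$) such that for each $i<m$ some $(q_i,\varphi,q_{i+1})\in E$ satisfies $\mathfrak M_\#\models\varphi(\pi_1(\langle w\rangle)[i],\dots,\pi_n(\langle w\rangle)[i])$. $R$ is $\mathfrak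 M$-recognizable if it is the set of tuples accepted by some $\mathfrak M$-automaton. $MSO(\mathfrak M)$-definability: to each first-order $\mathfrak L_\#$-formula $F$ with at least one free variable associate a unary predicate symbol $\alpha_F$; $MSO(\mathfrak L)$ is monadic second-order logic over the signature $\{<\}\cup\{\alpha_F\}$. $R\subseteq(\Sigma^* )^n$ is $MSO(\mathfrak M)$-definable if there is an $MSO(\mathfrak L)$-sentence $\psi$ such that $w\in R$ iff $\psi$ holds in the structure with domain $D=\{0,\dots,|\langle w\rangle|-1\}$, $<$ the natural order on $D$, and, for each $F$ with $n$ free variables, $\alpha_F(x)$ true iff $\mathfrak M_\#\models F(\pi_1(\langle w\rangle)[x],\dots,\pi_n(\langle w\rangle)[x])$. *)

theory Defs
  imports Main
begin

text \<open>An L-structure with domain Sigma is modelled by taking the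
domain to be the whole type 'a, and interpreting each symbol r as a set I r of
tuples (lists) of length ar r. The extended domain Sigma plus the fresh symbol
# is modelled by 'a option, where None plays the role of #.\<close>

definition is_structure :: "'r set \<Rightarrow> ('r \<Rightarrow> nat) \<Rightarrow> ('r \<Rightarrow> 'a list set) \<Rightarrow> bool" where
  "is_structure L ar I \<longleftrightarrow> (\<forall>r xs. xs \<in> I r \<longrightarrow> r \<in> L \<and> length xs = ar r)"

datatype 'r fo =
    FEq nat nat
  | FRel 'r "nat list"
  | FHash nat
  | FNeg "'r fo"
  | FConj "'r fo" "'r fo"
  | FEx nat "'r fo"

fun fo_wf :: "'r set \<Rightarrow> ('r \<Rightarrow> nat) \<Rightarrow> 'r fo \<Rightarrow> bool" where
  "fo_wf L ar (FEq x y) = True"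
| "fo_wf L ar (FRel r xs) = (r \<in> L \<and> length xs = ar r)"
| "fo_wf L ar (FHash x) = True"
| "fo_wf L ar (FNeg \<phi>) = fo_wf L ar \<phi>"
| "fo_wf L ar (FConj \<phi> \<psi>) = (fo_wf L ar \<phi> \<and> fo_wf L ar \<psi>)"
| "fo_wf L ar (FEx x \<phi>) = fo_wf L ar \<phi>"

fun fo_fv :: "'r fo \<Rightarrow> nat set" where
  "fo_fv (FEq x y) = {x, y}"
| "fo_fv (FRel r xs) = set xs"
| "fo_fv (FHash x) = {x}"
| "fo_fv (FNeg \<phi>) = fo_fv \<phi>"
| "fo_fv (FConj \<phi> \<psi>) = fo_fv \<phi> \<union> fo_fv \<psi>"
| "fo_fv (FEx x \<phi>) = fo_fv \<phi> - {x}"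

text \<open>Satisfaction in M_#: domain 'a option (None = #), symbols of L interpreted
as in M (tuples containing # are never related), P_# x iff x = #.\<close>

fun fo_sat :: "('r \<Rightarrow> 'a list set) \<Rightarrow> (nat \<Rightarrow> 'a option) \<Rightarrow> 'r fo \<Rightarrow> bool" where
  "fo_sat I v (FEq x y) = (v x = v y)"
| "fo_sat I v (FRel r xs) = ((\<forall>x\<in>set xs. v x \<noteq> None) \<and> map (the \<circ> v) xs \<in> I r)"
| "fo_sat I v (FHash x) = (v x = None)"
| "fo_sat I v (FNeg \<phi>) = (\<not> fo_sat I v \<phi>)"
| "fo_sat I v (FConj \<phi> \<psi>) = (fo_sat I v \<phi> \<and> fo_sat I v \<psi>)"
| "fo_sat I v (FEx x \<phi>) = (\<exists>a. fo_sat I (v(x := a)) \<phi>)"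

text \<open>F_n: formulas of L_# whose free variables are among x_1..x_n, where the
variable x_j is represented by the number j - 1.\<close>

definition fo_formula_n :: "'r set \<Rightarrow> ('r \<Rightarrow> nat) \<Rightarrow> nat \<Rightarrow> 'r fo \<Rightarrow> bool" where
  "fo_formula_n L ar n \<phi> \<longleftrightarrow> fo_wf L ar \<phi> \<and> fo_fv \<phi> \<subseteq> {..<n}"

text \<open>A tuple w in (Sigma^*)^n is a list of n words. padlen w = |<w>|, and
col w i is the i-th letter of <w> as a valuation: variable j gets
pi_(j+1)(<w>)[i], i.e. the i-th letter of the j-th word or # (None).\<close>

definition padlen :: "'a list list \<Rightarrow> nat" where
  "padlen w = foldr max (map length w) 0"

definition col :: "'a list list \<Rightarrow> nat \<Rightarrow> nat \<Rightarrow> 'a option" where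
  "col w i j = (if j < length w \<and> i < length (w ! j) then Some (w ! j ! i) else None)"

definition is_automaton ::
  "'r set \<Rightarrow> ('r \<Rightarrow> nat) \<Rightarrow> nat \<Rightarrow> nat set \<Rightarrow> (nat \<times> 'r fo \<times> nat) set \<Rightarrow> nat set \<Rightarrow> nat set \<Rightarrow> bool" where
  "is_automaton L ar n Q E I0 T \<longleftrightarrow>
     finite Q \<and> I0 \<subseteq> Q \<and> T \<subseteq> Q \<and> finite E \<and>
     E \<subseteq> Q \<times> {\<phi>. fo_formula_n L ar n \<phi>} \<times> Q"

definition aut_accepts ::
  "('r \<Rightarrow> 'a list set) \<Rightarrow> (nat \<times> 'r fo \<times> nat) set \<Rightarrow> nat set \<Rightarrow> nat set \<Rightarrow> 'a list list \<Rightarrow> bool" where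
  "aut_accepts I E I0 T w \<longleftrightarrow>
     (\<exists>qs :: nat \<Rightarrow> nat. qs 0 \<in> I0 \<and> qs (padlen w) \<in> T \<and>
        (\<forall>i < padlen w. \<exists>\<phi>. (qs i, \<phi>, qs (Suc i)) \<in> E \<and> fo_sat I (col w i) \<phi>))"

definition recognizable ::
  "'r set \<Rightarrow> ('r \<Rightarrow> nat) \<Rightarrow> ('r \<Rightarrow> 'a list set) \<Rightarrow> nat \<Rightarrow> 'a list list set \<Rightarrow> bool" where
  "recognizable L ar I n R \<longleftrightarrow>
     (\<exists>Q E I0 T. is_automaton L ar n Q E I0 T \<and>
        R = {w. length w = n \<and> aut_accepts I E I0 T w})"

datatype 'r mso =
    MLess nat nat
  | MEq nat nat
  | MAlpha "'r fo" nat
  | MMem nat nat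
  | MNeg "'r mso"
  | MConj "'r mso" "'r mso"
  | MEx1 nat "'r mso"
  | MEx2 nat "'r mso"

fun mso_fv1 :: "'r mso \<Rightarrow> nat set" where
  "mso_fv1 (MLess x y) = {x, y}"
| "mso_fv1 (MEq x y) = {x, y}"
| "mso_fv1 (MAlpha F x) = {x}"
| "mso_fv1 (MMem x X) = {x}"
| "mso_fv1 (MNeg \<psi>) = mso_fv1 \<psi>"
| "mso_fv1 (MConj \<psi> \<chi>) = mso_fv1 \<psi> \<union> mso_fv1 \<chi>"
| "mso_fv1 (MEx1 x \<psi>) = mso_fv1 \<psi> - {x}"
| "mso_fv1 (MEx2 X \<psi>) = mso_fv1 \<psi>"

fun mso_fv2 :: "'r mso \<Rightarrow> nat set" where
  "mso_fv2 (MLess x y) = {}"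
| "mso_fv2 (MEq x y) = {}"
| "mso_fv2 (MAlpha F x) = {}"
| "mso_fv2 (MMem x X) = {X}"
| "mso_fv2 (MNeg \<psi>) = mso_fv2 \<psi>"
| "mso_fv2 (MConj \<psi> \<chi>) = mso_fv2 \<psi> \<union> mso_fv2 \<chi>"
| "mso_fv2 (MEx1 x \<psi>) = mso_fv2 \<psi>"
| "mso_fv2 (MEx2 X \<psi>) = mso_fv2 \<psi> - {X}"

definition mso_sentence :: "'r mso \<Rightarrow> bool" where
  "mso_sentence \<psi> \<longleftrightarrow> mso_fv1 \<psi> = {} \<and> mso_fv2 \<psi> = {}"

fun mso_ok :: "'r set \<Rightarrow> ('r \<Rightarrow> nat) \<Rightarrow> nat \<Rightarrow> 'r mso \<Rightarrow> bool" where
  "mso_ok L ar n (MAlpha F x) = (fo_formula_n L ar n F \<and> fo_fv F \<noteq> {})"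
| "mso_ok L ar n (MNeg \<psi>) = mso_ok L ar n \<psi>"
| "mso_ok L ar n (MConj \<psi> \<chi>) = (mso_ok L ar n \<psi> \<and> mso_ok L ar n \<chi>)"
| "mso_ok L ar n (MEx1 x \<psi>) = mso_ok L ar n \<psi>"
| "mso_ok L ar n (MEx2 X \<psi>) = mso_ok L ar n \<psi>"
| "mso_ok L ar n _ = True"

fun mso_sat :: "('r \<Rightarrow> 'a list set) \<Rightarrow> 'a list list \<Rightarrow> (nat \<Rightarrow> nat) \<Rightarrow> (nat \<Rightarrow> nat set) \<Rightarrow> 'r mso \<Rightarrow> bool" where
  "mso_sat I w v1 v2 (MLess x y) = (v1 x < v1 y)"
| "mso_sat I w v1 v2 (MEq x y) = (v1 x = v1 y)"
| "mso_sat I w v1 v2 (MAlpha F x) = fo_sat I (col w (v1 x)) F"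
| "mso_sat I w v1 v2 (MMem x X) = (v1 x \<in> v2 X)"
| "mso_sat I w v1 v2 (MNeg \<psi>) = (\<not> mso_sat I w v1 v2 \<psi>)"
| "mso_sat I w v1 v2 (MConj \<psi> \<chi>) = (mso_sat I w v1 v2 \<psi> \<and> mso_sat I w v1 v2 \<chi>)"
| "mso_sat I w v1 v2 (MEx1 x \<psi>) = (\<exists>p < padlen w. mso_sat I w (v1(x := p)) v2 \<psi>)"
| "mso_sat I w v1 v2 (MEx2 X \<psi>) = (\<exists>S \<subseteq> {..<padlen w}. mso_sat I w v1 (v2(X := S)) \<psi>)"

definition mso_holds :: "('r \<Rightarrow> 'a list set) \<Rightarrow> 'a list list \<Rightarrow> 'r mso \<Rightarrow> bool" where
  "mso_holds I w \<psi> = mso_sat I w (\<lambda>_. 0) (\<lambda>_. {}) \<psi>"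

definition mso_definable ::
  "'r set \<Rightarrow> ('r \<Rightarrow> nat) \<Rightarrow> ('r \<Rightarrow> 'a list set) \<Rightarrow> nat \<Rightarrow> 'a list list set \<Rightarrow> bool" where
  "mso_definable L ar I n R \<longleftrightarrow>
     (\<exists>\<psi>. mso_ok L ar n \<psi> \<and> mso_sentence \<psi> \<and>
        (\<forall>w. length w = n \<longrightarrow> (w \<in> R \<longleftrightarrow> mso_holds I w \<psi>)))"

end

theory Submission
  imports Defs
begin


section \<open>Quotients\<close>

definition quot :: "'b list \<Rightarrow> 'b list set \<Rightarrow> 'b list set" where
  "quot u L = {v. u @ v \<in> L}"

definition fq :: "'b list set \<Rightarrow> bool" where
  "fq L \<longleftrightarrow> finite (range (\<lambda>u. quot u L))"

lemma fq_UNIV: "fq UNIV"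
proof -
  have "range (\<lambda>u. quot u (UNIV::'b list set)) \<subseteq> {UNIV}" by (auto simp: quot_def)
  then show ?thesis unfolding fq_def using finite_subset by blast
qed

lemma fq_inter: assumes "fq A" "fq B" shows "fq (A \<inter> B)"
proof -
  have "range (\<lambda>u. quot u (A \<inter> B)) \<subseteq> (\<lambda>(a,b). a \<inter> b) ` (range (\<lambda>u. quot u A) \<times> range (\<lambda>u. quot u B))"
  proof
    fix X assume "X \<in> range (\<lambda>u. quot u (A \<inter> B))"
    then obtain u where "X = quot u (A \<inter> B)" by blast
    then have "X = (\<lambda>(a,b). a \<inter> b) (quot u A, quot u B)" by (auto simp: quot_def)
    then show "X \<in> (\<lambda>(a,b). a \<inter> b) ` (range (\<lambda>u. quot u A) \<times> range (\<lambda>u. quot u B))"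
      by blast
  qed
  moreover have "finite ((\<lambda>(a,b). a \<inter> b) ` (range (\<lambda>u. quot u A) \<times> range (\<lambda>u. quot u B)))"
    using assms unfolding fq_def by auto
  ultimately show ?thesis unfolding fq_def using finite_subset by blast
qed

lemma fq_compl: assumes "fq A" shows "fq (- A)"
proof -
  have "range (\<lambda>u. quot u (- A)) = uminus ` range (\<lambda>u. quot u A)"
    by (auto simp: quot_def image_iff)
  then show ?thesis using assms unfolding fq_def by auto
qed

lemma fq_diff: "fq A \<Longrightarrow> fq B \<Longrightarrow> fq (A - B)"
  using fq_inter[OF _ fq_compl] by (simp add: Diff_eq)

lemma fq_Inter: "finite V \<Longrightarrow> (\<forall>x\<in>V. fq (F x)) \<Longrightarrow> fq (\<Inter>x\<in>V. F x)"
  by (induction V rule: finite_induct) (auto intro: fq_UNIV fq_inter)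

definition Cont :: "'b set \<Rightarrow> 'b list set" where
  "Cont C = {u. \<exists>l\<in>set u. l \<in> C}"

lemma fq_Cont: "fq (Cont C)"
proof -
  have "range (\<lambda>u. quot u (Cont C)) \<subseteq> {UNIV, Cont C}" by (auto simp: quot_def Cont_def)
  then show ?thesis unfolding fq_def using finite_subset by blast
qed

definition Seq :: "'b set \<Rightarrow> 'b set \<Rightarrow> 'b list set" where
  "Seq C D = {u. \<exists>i j. i < j \<and> j < length u \<and> u!i \<in> C \<and> u!j \<in> D}"

lemma Seq_append: "u @ v \<in> Seq C D \<longleftrightarrow> u \<in> Seq C D \<or> (u \<in> Cont C \<and> v \<in> Cont D) \<or> v \<in> Seq C D"
proof
  assume "u @ v \<in> Seq C D"
  then obtain i j where ij: "i < j" "j < length (u@v)" "(u@v)!i \<in> C" "(u@v)!j \<in> D"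
    by (auto simp: Seq_def)
  show "u \<in> Seq C D \<or> (u \<in> Cont C \<and> v \<in> Cont D) \<or> v \<in> Seq C D"
  proof (cases "j < length u")
    case True
    then have "i < j" "j < length u" "u!i \<in> C" "u!j \<in> D" using ij by (auto simp: nth_append)
    then show ?thesis unfolding Seq_def by blast
  next
    case False
    note F = False
    show ?thesis
    proof (cases "i < length u")
      case True
      then have "u!i \<in> C" using ij by (simp add: nth_append)
      then have "u \<in> Cont C" using True unfolding Cont_def by (blast intro: nth_mem)
      moreover have "v!(j - length u) \<in> D" "j - length u < length v" using ij F by (auto simp: nth_append)
      then have "v \<in> Cont D" unfolding Cont_def by (blast intro: nth_mem)
      ultimately show ?thesis by blast
    next
      case False
      have "length u \<le> i" using False by (rule leI)
      have "length u \<le> j" using F by (rule leI)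
      from \<open>length u \<le> i\<close> \<open>length u \<le> j\<close>
      have "i - length u < j - length u" "j - length u < length v"
        "v!(i-length u) \<in> C" "v!(j - length u) \<in> D" using ij by (simp_all add: nth_append)
      then have "v \<in> Seq C D" unfolding Seq_def by blast
      then show ?thesis by blast
    qed
  qed
next
  assume "u \<in> Seq C D \<or> (u \<in> Cont C \<and> v \<in> Cont D) \<or> v \<in> Seq C D"
  then show "u @ v \<in> Seq C D"
  proof (elim disjE conjE)
    assume "u \<in> Seq C D"
    then obtain i j where "i < j" "j < length u" "u!i \<in> C" "u!j \<in> D" by (auto simp: Seq_def)
    then have "i < j" "j < length (u@v)" "(u@v)!i \<in> C" "(u@v)!j \<in> D" by (auto simp: nth_append)
    then show ?thesis unfolding Seq_def by blast
  next
    assume "u \<in> Cont C" "v \<in> Cont D"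
    then obtain i j where "i < length u" "u!i \<in> C" "j < length v" "v!j \<in> D"
      by (auto simp: Cont_def in_set_conv_nth)
    then have "i < length u + j" "length u + j < length (u@v)" "(u@v)!i \<in> C" "(u@v)!(length u + j) \<in> D"
      by (auto simp: nth_append)
    then show ?thesis unfolding Seq_def by blast
  next
    assume "v \<in> Seq C D"
    then obtain i j where "i < j" "j < length v" "v!i \<in> C" "v!j \<in> D" by (auto simp: Seq_def)
    then have "length u + i < length u + j" "length u + j < length (u@v)" "(u@v)!(length u + i) \<in> C" "(u@v)!(length u + j) \<in> D"
      by (auto simp: nth_append)
    then show ?thesis unfolding Seq_def by blast
  qed
qed

lemma fq_Seq: "fq (Seq C D)"
proof -
  have "quot u (Seq C D) = (if u \<in> Seq C D then UNIV else if u \<in> Cont C then Seq C D \<union> Cont D else Seq C D)" for u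
    by (auto simp: quot_def Seq_append)
  then have "range (\<lambda>u. quot u (Seq C D)) \<subseteq> {UNIV, Seq C D \<union> Cont D, Seq C D}"
    by auto
  then show ?thesis unfolding fq_def using finite_subset by blast
qed

definition proj :: "('b \<Rightarrow> 'b \<Rightarrow> bool) \<Rightarrow> 'b list set \<Rightarrow> 'b list set" where
  "proj R L = {u. \<exists>u'\<in>L. list_all2 R u u'}"

lemma quot_proj: "quot u (proj R L) = proj R (\<Union>{quot u' L | u'. list_all2 R u u'})"
proof (rule set_eqI)
  fix v
  show "v \<in> quot u (proj R L) \<longleftrightarrow> v \<in> proj R (\<Union>{quot u' L | u'. list_all2 R u u'})"
  proof
    assume "v \<in> quot u (proj R L)"
    then obtain z where z: "z \<in> L" "list_all2 R (u @ v) z" by (auto simp: quot_def proj_def)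
    then obtain us vs where "z = us @ vs" "list_all2 R u us" "list_all2 R v vs"
      unfolding list_all2_append1 by blast
    then have "vs \<in> quot us L" using z by (simp add: quot_def)
    then show "v \<in> proj R (\<Union>{quot u' L | u'. list_all2 R u u'})"
      unfolding proj_def using \<open>list_all2 R u us\<close> \<open>list_all2 R v vs\<close> by blast
  next
    assume "v \<in> proj R (\<Union>{quot u' L | u'. list_all2 R u u'})"
    then obtain vs us where "list_all2 R v vs" "vs \<in> quot us L" "list_all2 R u us"
      unfolding proj_def by blast
    then have "us @ vs \<in> L" "list_all2 R (u @ v) (us @ vs)"
      by (auto simp: quot_def intro: list_all2_appendI)
    then show "v \<in> quot u (proj R L)" unfolding quot_def proj_def by blast
  qed
qed

lemma fq_proj: assumes "fq L" shows "fq (proj R L)"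
proof -
  have "range (\<lambda>u. quot u (proj R L)) \<subseteq> (\<lambda>S. proj R (\<Union>S)) ` Pow (range (\<lambda>u. quot u L))"
  proof
    fix X assume "X \<in> range (\<lambda>u. quot u (proj R L))"
    then obtain u where u: "X = quot u (proj R L)" by blast
    have "{quot u' L | u'. list_all2 R u u'} \<in> Pow (range (\<lambda>u. quot u L))" by auto
    then show "X \<in> (\<lambda>S. proj R (\<Union>S)) ` Pow (range (\<lambda>u. quot u L))"
      unfolding u quot_proj by (rule imageI)
  qed
  moreover have "finite ((\<lambda>S. proj R (\<Union>S)) ` Pow (range (\<lambda>u. quot u L)))"
    using assms unfolding fq_def by (intro finite_imageI) simp
  ultimately show ?thesis unfolding fq_def by (rule finite_subset)
qed



section \<open>Annotated words\<close>

definition has1 :: "('c \<times> nat set \<times> nat set) list \<Rightarrow> nat \<Rightarrow> nat \<Rightarrow> bool" where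
  "has1 u x i \<longleftrightarrow> i < length u \<and> x \<in> fst (snd (u!i))"

definition cnt :: "('c \<times> nat set \<times> nat set) list \<Rightarrow> nat \<Rightarrow> nat" where
  "cnt u x = card {i. has1 u x i}"

definition val1 :: "('c \<times> nat set \<times> nat set) list \<Rightarrow> nat \<Rightarrow> nat" where
  "val1 u x = (if \<exists>i. has1 u x i then LEAST i. has1 u x i else 0)"

definition val2 :: "('c \<times> nat set \<times> nat set) list \<Rightarrow> nat \<Rightarrow> nat set" where
  "val2 u X = {i. i < length u \<and> X \<in> snd (snd (u!i))}"

definition lets :: "('c \<times> nat set \<times> nat set) list \<Rightarrow> nat \<Rightarrow> 'c" where
  "lets u i = (if i < length u then fst (u!i) else undefined)"

definition valid :: "nat set \<Rightarrow> ('c \<times> nat set \<times> nat set) list \<Rightarrow> bool" where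
  "valid V u \<longleftrightarrow> (\<forall>x\<in>V. cnt u x = 1)"

definition Vset :: "nat set \<Rightarrow> ('c \<times> nat set \<times> nat set) list set" where
  "Vset V = {u. valid V u}"

lemma cnt_filter: "cnt u x = length (filter (\<lambda>l. x \<in> fst (snd l)) u)"
  unfolding cnt_def has1_def by (simp add: length_filter_conv_card)

lemma cnt_append: "cnt (u @ v) x = cnt u x + cnt v x"
  unfolding cnt_filter by simp

lemma fq_Vset1: "fq (Vset {x})"
proof -
  have q: "quot u (Vset {x}) = {v. cnt u x + cnt v x = 1}" for u
    by (simp add: quot_def Vset_def valid_def cnt_append)
  have q2: "quot u (Vset {x}) \<in> (\<lambda>k. {v. k + cnt v x = 1}) ` {0,1,2}" for u
  proof (cases "cnt u x \<le> 1")
    case True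
    then have "cnt u x \<in> {0,1,2}" by auto
    then show ?thesis unfolding q by (rule imageI)
  next
    case False
    then have "quot u (Vset {x}) = {v. 2 + cnt v x = 1}" unfolding q by simp
    then show ?thesis by (rule image_eqI) simp
  qed
  have "range (\<lambda>u. quot u (Vset {x})) \<subseteq> (\<lambda>k. {v. k + cnt v x = 1}) ` {0,1,2}"
    by (intro image_subsetI) (rule q2)
  then show ?thesis unfolding fq_def by (rule finite_subset) simp
qed

lemma Vset_Inter: "Vset V = (\<Inter>x\<in>V. Vset {x})"
  by (auto simp: Vset_def valid_def)

lemma fq_Vset: "finite V \<Longrightarrow> fq (Vset V)"
  by (subst Vset_Inter) (rule fq_Inter, auto intro: fq_Vset1)

lemma val1_char: assumes "cnt u x = 1" shows "has1 u x i \<longleftrightarrow> i = val1 u x"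
proof -
  from assms have "card {i. has1 u x i} = Suc 0" unfolding cnt_def by simp
  then obtain p where p: "{i. has1 u x i} = {p}"
    unfolding card_1_singleton_iff by blast
  have h: "has1 u x i \<longleftrightarrow> i = p" for i using p by (metis mem_Collect_eq singleton_iff)
  have "val1 u x = p" unfolding val1_def h by (simp add: Least_equality)
  then show ?thesis using h by simp
qed

section \<open>Generic MSO semantics\<close>

fun msat :: "('r fo \<Rightarrow> 'c \<Rightarrow> bool) \<Rightarrow> (nat \<Rightarrow> 'c) \<Rightarrow> nat \<Rightarrow> (nat \<Rightarrow> nat) \<Rightarrow> (nat \<Rightarrow> nat set) \<Rightarrow> 'r mso \<Rightarrow> bool" where
  "msat P lt m v1 v2 (MLess x y) = (v1 x < v1 y)"
| "msat P lt m v1 v2 (MEq x y) = (v1 x = v1 y)"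
| "msat P lt m v1 v2 (MAlpha F x) = P F (lt (v1 x))"
| "msat P lt m v1 v2 (MMem x X) = (v1 x \<in> v2 X)"
| "msat P lt m v1 v2 (MNeg \<psi>) = (\<not> msat P lt m v1 v2 \<psi>)"
| "msat P lt m v1 v2 (MConj \<psi> \<chi>) = (msat P lt m v1 v2 \<psi> \<and> msat P lt m v1 v2 \<chi>)"
| "msat P lt m v1 v2 (MEx1 x \<psi>) = (\<exists>p < m. msat P lt m (v1(x := p)) v2 \<psi>)"
| "msat P lt m v1 v2 (MEx2 X \<psi>) = (\<exists>S \<subseteq> {..<m}. msat P lt m v1 (v2(X := S)) \<psi>)"

lemma finite_fv1: "finite (mso_fv1 \<psi>)"
  by (induction \<psi>) auto

definition Lang :: "('r fo \<Rightarrow> 'c \<Rightarrow> bool) \<Rightarrow> 'r mso \<Rightarrow> ('c \<times> nat set \<times> nat set) list set" where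
  "Lang P \<psi> = {u. valid (mso_fv1 \<psi>) u \<and> msat P (lets u) (length u) (val1 u) (val2 u) \<psi>}"

definition same1 :: "nat \<Rightarrow> ('c \<times> nat set \<times> nat set) \<Rightarrow> ('c \<times> nat set \<times> nat set) \<Rightarrow> bool" where
  "same1 x l l' \<longleftrightarrow> fst l = fst l' \<and> fst (snd l) - {x} = fst (snd l') - {x} \<and> snd (snd l) = snd (snd l')"

definition same2 :: "nat \<Rightarrow> ('c \<times> nat set \<times> nat set) \<Rightarrow> ('c \<times> nat set \<times> nat set) \<Rightarrow> bool" where
  "same2 X l l' \<longleftrightarrow> fst l = fst l' \<and> fst (snd l) = fst (snd l') \<and> snd (snd l) - {X} = snd (snd l') - {X}"

lemma Lang_Neg: "Lang P (MNeg \<psi>) = Vset (mso_fv1 \<psi>) - Lang P \<psi>"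
  by (auto simp: Lang_def Vset_def)

lemma Lang_Conj: "Lang P (MConj \<psi> \<chi>) = Lang P \<psi> \<inter> Lang P \<chi>"
  by (auto simp: Lang_def valid_def)

lemma Seq_has1: "u \<in> Seq {l. x \<in> fst (snd l)} {l. y \<in> fst (snd l)} \<longleftrightarrow> (\<exists>i j. i < j \<and> has1 u x i \<and> has1 u y j)"
  unfolding Seq_def has1_def by (auto intro: less_trans)

lemma Cont_has1: "u \<in> Cont {l. x \<in> fst (snd l) \<and> Q l} \<longleftrightarrow> (\<exists>i. has1 u x i \<and> Q (u!i))"
proof
  assume "u \<in> Cont {l. x \<in> fst (snd l) \<and> Q l}"
  then obtain l where l: "l \<in> set u" "x \<in> fst (snd l)" "Q l" by (auto simp: Cont_def)
  then obtain i where "i < length u" "u!i = l" by (auto simp: in_set_conv_nth)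
  then show "\<exists>i. has1 u x i \<and> Q (u!i)" unfolding has1_def using l by auto
next
  assume "\<exists>i. has1 u x i \<and> Q (u!i)"
  then obtain i where "i < length u" "x \<in> fst (snd (u!i))" "Q (u!i)" unfolding has1_def by blast
  then show "u \<in> Cont {l. x \<in> fst (snd l) \<and> Q l}" unfolding Cont_def
    by (intro CollectI bexI[of _ "u!i"]) auto
qed

lemma Lang_Less: "Lang P (MLess x y) = Vset {x,y} \<inter> Seq {l. x \<in> fst (snd l)} {l. y \<in> fst (snd l)}"
proof -
  have "val1 u x < val1 u y \<longleftrightarrow> u \<in> Seq {l. x \<in> fst (snd l)} {l. y \<in> fst (snd l)}"
    if "valid {x,y} u" for u
  proof -
    have hx: "has1 u x i \<longleftrightarrow> i = val1 u x" for i using that val1_char[of u x] unfolding valid_def by simp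
    have hy: "has1 u y i \<longleftrightarrow> i = val1 u y" for i using that val1_char[of u y] unfolding valid_def by simp
    show ?thesis unfolding Seq_has1 hx hy by simp
  qed
  then show ?thesis by (auto simp: Lang_def Vset_def)
qed

lemma Lang_Eq: "Lang P (MEq x y) = Vset {x,y} \<inter> Cont {l. x \<in> fst (snd l) \<and> y \<in> fst (snd l)}"
proof -
  have "val1 u x = val1 u y \<longleftrightarrow> u \<in> Cont {l. x \<in> fst (snd l) \<and> y \<in> fst (snd l)}"
    if "valid {x,y} u" for u
  proof -
    have hx: "has1 u x i \<longleftrightarrow> i = val1 u x" for i using that val1_char[of u x] unfolding valid_def by simp
    have hy: "has1 u y i \<longleftrightarrow> i = val1 u y" for i using that val1_char[of u y] unfolding valid_def by simp
    have "y \<in> fst (snd (u!i)) \<longleftrightarrow> has1 u y i" if "i < length u" for i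
      using that unfolding has1_def by simp
    have "u \<in> Cont {l. x \<in> fst (snd l) \<and> y \<in> fst (snd l)} \<longleftrightarrow> (\<exists>i. has1 u x i \<and> has1 u y i)"
      unfolding Cont_has1 by (auto simp: has1_def)
    then show ?thesis unfolding hx hy by simp
  qed
  then show ?thesis by (auto simp: Lang_def Vset_def)
qed

lemma Lang_Alpha: "Lang P (MAlpha F x) = Vset {x} \<inter> Cont {l. x \<in> fst (snd l) \<and> P F (fst l)}"
proof -
  have "P F (lets u (val1 u x)) \<longleftrightarrow> u \<in> Cont {l. x \<in> fst (snd l) \<and> P F (fst l)}"
    if "valid {x} u" for u
  proof -
    have hx: "has1 u x i \<longleftrightarrow> i = val1 u x" for i using that val1_char[of u x] unfolding valid_def by simp
    have "val1 u x < length u" using hx[of "val1 u x"] unfolding has1_def by simp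
    then show ?thesis unfolding Cont_has1 hx by (simp add: lets_def)
  qed
  then show ?thesis by (auto simp: Lang_def Vset_def)
qed

lemma Lang_Mem: "Lang P (MMem x X) = Vset {x} \<inter> Cont {l. x \<in> fst (snd l) \<and> X \<in> snd (snd l)}"
proof -
  have "val1 u x \<in> val2 u X \<longleftrightarrow> u \<in> Cont {l. x \<in> fst (snd l) \<and> X \<in> snd (snd l)}"
    if "valid {x} u" for u
  proof -
    have hx: "has1 u x i \<longleftrightarrow> i = val1 u x" for i using that val1_char[of u x] unfolding valid_def by simp
    have "val1 u x < length u" using hx[of "val1 u x"] unfolding has1_def by simp
    then show ?thesis unfolding Cont_has1 hx by (simp add: val2_def)
  qed
  then show ?thesis by (auto simp: Lang_def Vset_def)
qed



lemma same1_transfer: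
  assumes "list_all2 (same1 x) u u'"
  shows "length u = length u'" "lets u = lets u'" "val2 u = val2 u'"
    "y \<noteq> x \<Longrightarrow> has1 u y = has1 u' y"
proof -
  have len: "length u = length u'" using assms by (rule list_all2_lengthD)
  have n: "\<And>i. i < length u \<Longrightarrow> same1 x (u!i) (u'!i)" using assms by (simp add: list_all2_conv_all_nth)
  show "length u = length u'" by (rule len)
  show "lets u = lets u'" using n len by (auto simp: lets_def same1_def)
  show "val2 u = val2 u'" unfolding val2_def
  proof (rule ext, rule Collect_cong)
    fix Y i show "(i < length u \<and> Y \<in> snd (snd (u!i))) = (i < length u' \<and> Y \<in> snd (snd (u'!i)))"
      using n[of i] len by (auto simp: same1_def)
  qed
  assume "y \<noteq> x"
  then show "has1 u y = has1 u' y" using n len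
    by (auto simp: has1_def same1_def fun_eq_iff)
qed

lemma same2_transfer:
  assumes "list_all2 (same2 X) u u'"
  shows "length u = length u'" "lets u = lets u'" "has1 u = has1 u'"
    "Y \<noteq> X \<Longrightarrow> val2 u Y = val2 u' Y"
proof -
  have len: "length u = length u'" using assms by (rule list_all2_lengthD)
  have n: "\<And>i. i < length u \<Longrightarrow> same2 X (u!i) (u'!i)" using assms by (simp add: list_all2_conv_all_nth)
  show "length u = length u'" by (rule len)
  show "lets u = lets u'" using n len by (auto simp: lets_def same2_def)
  show "has1 u = has1 u'" using n len by (auto simp: has1_def same2_def fun_eq_iff)
  assume "Y \<noteq> X"
  then show "val2 u Y = val2 u' Y" using n len
    by (auto simp: val2_def same2_def)
qed

lemma has1_cnt_val1:
  assumes "has1 u y = has1 u' y"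
  shows "cnt u y = cnt u' y" "val1 u y = val1 u' y"
  using assms by (simp_all add: cnt_def val1_def)

lemma Lang_Ex1: "Lang P (MEx1 x \<psi>) = Vset (mso_fv1 \<psi> - {x}) \<inter> proj (same1 x) (Lang P \<psi> \<inter> Vset {x})"
proof (rule set_eqI, rule iffI)
  fix u assume "u \<in> Lang P (MEx1 x \<psi>)"
  then have v: "valid (mso_fv1 \<psi> - {x}) u" and
    "\<exists>p < length u. msat P (lets u) (length u) ((val1 u)(x := p)) (val2 u) \<psi>"
    by (auto simp: Lang_def)
  then obtain p where p: "p < length u" "msat P (lets u) (length u) ((val1 u)(x := p)) (val2 u) \<psi>"
    by blast
  define u' where "u' = map (\<lambda>i. (fst (u!i), if i = p then insert x (fst (snd (u!i))) else fst (snd (u!i)) - {x}, snd (snd (u!i)))) [0..<length u]"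
  have lu: "length u' = length u" by (simp add: u'_def)
  have nu: "u'!i = (fst (u!i), if i = p then insert x (fst (snd (u!i))) else fst (snd (u!i)) - {x}, snd (snd (u!i)))"
    if "i < length u" for i using that by (simp add: u'_def)
  have rel: "list_all2 (same1 x) u u'"
    unfolding list_all2_conv_all_nth using lu nu by (auto simp: same1_def)
  note tr = same1_transfer[OF rel]
  have hx: "has1 u' x = (\<lambda>i. i = p)"
    using p(1) lu nu by (auto simp: has1_def fun_eq_iff split: if_splits)
  then have cx: "cnt u' x = 1" by (simp add: cnt_def)
  have vx: "val1 u' x = p" using hx by (simp add: val1_def Least_equality)
  have v1: "val1 u' = (val1 u)(x := p)"
  proof
    fix y show "val1 u' y = ((val1 u)(x := p)) y"
      using vx has1_cnt_val1(2)[OF tr(4)] by (cases "y = x") auto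
  qed
  have "valid (mso_fv1 \<psi>) u'"
    unfolding valid_def
  proof
    fix y assume "y \<in> mso_fv1 \<psi>"
    then show "cnt u' y = 1"
      using cx v has1_cnt_val1(1)[OF tr(4)] unfolding valid_def by (cases "y = x") auto
  qed
  moreover have "msat P (lets u') (length u') (val1 u') (val2 u') \<psi>"
    using p(2) tr v1 by simp
  ultimately have "u' \<in> Lang P \<psi> \<inter> Vset {x}" using cx by (simp add: Lang_def Vset_def valid_def)
  then have "u \<in> proj (same1 x) (Lang P \<psi> \<inter> Vset {x})" unfolding proj_def using rel by blast
  then show "u \<in> Vset (mso_fv1 \<psi> - {x}) \<inter> proj (same1 x) (Lang P \<psi> \<inter> Vset {x})"
    using v by (simp add: Vset_def)
next
  fix u assume "u \<in> Vset (mso_fv1 \<psi> - {x}) \<inter> proj (same1 x) (Lang P \<psi> \<inter> Vset {x})"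
  then obtain u' where v: "valid (mso_fv1 \<psi> - {x}) u" and rel: "list_all2 (same1 x) u u'"
    and u': "valid (mso_fv1 \<psi>) u'" "msat P (lets u') (length u') (val1 u') (val2 u') \<psi>" "cnt u' x = 1"
    by (auto simp: Vset_def proj_def Lang_def valid_def)
  note tr = same1_transfer[OF rel]
  define p where "p = val1 u' x"
  have "has1 u' x p" using val1_char[OF u'(3)] p_def by simp
  then have pl: "p < length u" using tr(1) by (simp add: has1_def)
  have v1: "val1 u' = (val1 u)(x := p)"
  proof
    fix y show "val1 u' y = ((val1 u)(x := p)) y"
      using p_def has1_cnt_val1(2)[OF tr(4)] by (cases "y = x") auto
  qed
  have "msat P (lets u) (length u) ((val1 u)(x := p)) (val2 u) \<psi>"
    using u'(2) tr v1 by simp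
  then show "u \<in> Lang P (MEx1 x \<psi>)" using v pl by (auto simp: Lang_def)
qed

lemma Lang_Ex2: "Lang P (MEx2 X \<psi>) = proj (same2 X) (Lang P \<psi>)"
proof (rule set_eqI, rule iffI)
  fix u assume "u \<in> Lang P (MEx2 X \<psi>)"
  then have v: "valid (mso_fv1 \<psi>) u" and
    "\<exists>S \<subseteq> {..<length u}. msat P (lets u) (length u) (val1 u) ((val2 u)(X := S)) \<psi>"
    by (auto simp: Lang_def)
  then obtain S where S: "S \<subseteq> {..<length u}" "msat P (lets u) (length u) (val1 u) ((val2 u)(X := S)) \<psi>"
    by blast
  define u' where "u' = map (\<lambda>i. (fst (u!i), fst (snd (u!i)), if i \<in> S then insert X (snd (snd (u!i))) else snd (snd (u!i)) - {X})) [0..<length u]"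
  have lu: "length u' = length u" by (simp add: u'_def)
  have nu: "u'!i = (fst (u!i), fst (snd (u!i)), if i \<in> S then insert X (snd (snd (u!i))) else snd (snd (u!i)) - {X})"
    if "i < length u" for i using that by (simp add: u'_def)
  have rel: "list_all2 (same2 X) u u'"
    unfolding list_all2_conv_all_nth using lu nu by (auto simp: same2_def)
  note tr = same2_transfer[OF rel]
  have vX: "val2 u' X = S"
    using S(1) lu nu by (auto simp: val2_def split: if_splits)
  have v2: "val2 u' = (val2 u)(X := S)"
  proof
    fix Y show "val2 u' Y = ((val2 u)(X := S)) Y"
      using vX tr(4) by (cases "Y = X") auto
  qed
  have vu: "val1 u' = val1 u" "cnt u' = cnt u" using tr(3) by (auto simp: val1_def cnt_def fun_eq_iff)
  have "valid (mso_fv1 \<psi>) u'" using v vu by (simp add: valid_def)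
  moreover have "msat P (lets u') (length u') (val1 u') (val2 u') \<psi>"
    using S(2) tr v2 vu by simp
  ultimately have "u' \<in> Lang P \<psi>" by (simp add: Lang_def)
  then show "u \<in> proj (same2 X) (Lang P \<psi>)" unfolding proj_def using rel by blast
next
  fix u assume "u \<in> proj (same2 X) (Lang P \<psi>)"
  then obtain u' where rel: "list_all2 (same2 X) u u'"
    and u': "valid (mso_fv1 \<psi>) u'" "msat P (lets u') (length u') (val1 u') (val2 u') \<psi>"
    by (auto simp: proj_def Lang_def)
  note tr = same2_transfer[OF rel]
  define S where "S = val2 u' X"
  have Ss: "S \<subseteq> {..<length u}" using tr(1) by (auto simp: S_def val2_def)
  have v2: "val2 u' = (val2 u)(X := S)"
  proof
    fix Y show "val2 u' Y = ((val2 u)(X := S)) Y"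
      using S_def tr(4) by (cases "Y = X") auto
  qed
  have vu: "val1 u' = val1 u" "cnt u' = cnt u" using tr(3) by (auto simp: val1_def cnt_def fun_eq_iff)
  have "msat P (lets u) (length u) (val1 u) ((val2 u)(X := S)) \<psi>"
    using u'(2) tr v2 vu by simp
  moreover have "valid (mso_fv1 \<psi>) u" using u'(1) vu by (simp add: valid_def)
  ultimately show "u \<in> Lang P (MEx2 X \<psi>)" using Ss by (auto simp: Lang_def)
qed

theorem fq_Lang: "fq (Lang P \<psi>)"
proof (induction \<psi>)
  case (MLess x y) show ?case unfolding Lang_Less by (intro fq_inter fq_Vset fq_Seq) simp
next
  case (MEq x y) show ?case unfolding Lang_Eq by (intro fq_inter fq_Vset fq_Cont) simp
next
  case (MAlpha F x) show ?case unfolding Lang_Alpha by (intro fq_inter fq_Vset fq_Cont) simp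
next
  case (MMem x X) show ?case unfolding Lang_Mem by (intro fq_inter fq_Vset fq_Cont) simp
next
  case (MNeg \<psi>) show ?case unfolding Lang_Neg by (intro fq_diff fq_Vset finite_fv1 MNeg)
next
  case (MConj \<psi> \<chi>) show ?case unfolding Lang_Conj by (intro fq_inter MConj)
next
  case (MEx1 x \<psi>) show ?case unfolding Lang_Ex1
    by (intro fq_inter fq_Vset fq_proj MEx1 finite_Diff finite_fv1) simp
next
  case (MEx2 X \<psi>) show ?case unfolding Lang_Ex2 by (intro fq_proj MEx2)
qed



fun atoms :: "'r mso \<Rightarrow> 'r fo set" where
  "atoms (MAlpha F x) = {F}"
| "atoms (MNeg \<psi>) = atoms \<psi>"
| "atoms (MConj \<psi> \<chi>) = atoms \<psi> \<union> atoms \<chi>"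
| "atoms (MEx1 x \<psi>) = atoms \<psi>"
| "atoms (MEx2 X \<psi>) = atoms \<psi>"
| "atoms _ = {}"

lemma finite_atoms: "finite (atoms \<psi>)"
  by (induction \<psi>) auto

lemma mso_ok_atoms: "mso_ok L ar n \<psi> \<Longrightarrow> F \<in> atoms \<psi> \<Longrightarrow> fo_formula_n L ar n F"
  by (induction \<psi>) auto

lemma mso_sat_msat: "mso_sat I w v1 v2 \<psi> = msat (\<lambda>F c. fo_sat I c F) (col w) (padlen w) v1 v2 \<psi>"
  by (induction \<psi> arbitrary: v1 v2) auto

lemma msat_cong:
  assumes "\<forall>i<m. \<forall>F\<in>atoms \<psi>. P F (lt i) = P' F (lt' i)" "\<forall>x\<in>mso_fv1 \<psi>. v1 x < m"
  shows "msat P lt m v1 v2 \<psi> = msat P' lt' m v1 v2 \<psi>"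
  using assms
proof (induction \<psi> arbitrary: v1 v2)
  case (MEx1 x \<psi>)
  have "msat P lt m (v1(x := p)) v2 \<psi> = msat P' lt' m (v1(x := p)) v2 \<psi>" if "p < m" for p
  proof -
    have a: "\<forall>y\<in>mso_fv1 \<psi>. (v1(x := p)) y < m" using MEx1.prems(2) that by auto
    show ?thesis by (rule MEx1.IH[OF _ a]) (use MEx1.prems(1) in simp)
  qed
  then show ?case by auto
next
  case (MEx2 X \<psi>)
  then show ?case by auto
qed auto

fun tau :: "'r fo list \<Rightarrow> bool list \<Rightarrow> 'r fo" where
  "tau (F # Fs) (b # bs) = FConj (if b then F else FNeg F) (tau Fs bs)"
| "tau _ _ = FEq 0 0"

lemma tau_sat: "length bs = length Fs \<Longrightarrow> fo_sat I c (tau Fs bs) \<longleftrightarrow> map (\<lambda>F. fo_sat I c F) Fs = bs"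
proof (induction Fs arbitrary: bs)
  case Nil then show ?case by simp
next
  case (Cons F Fs) then show ?case by (cases bs) auto
qed

lemma tau_wf: "\<forall>F\<in>set Fs. fo_formula_n L ar n F \<Longrightarrow> 1 \<le> n \<Longrightarrow> fo_formula_n L ar n (tau Fs bs)"
  by (induction Fs bs rule: tau.induct) (auto simp: fo_formula_n_def)

definition blank :: "'c \<Rightarrow> 'c \<times> nat set \<times> nat set" where
  "blank c = (c, {}, {})"

lemma blank_facts:
  "has1 (map blank cs) x i = False" "val1 (map blank cs) = (\<lambda>_. 0)" "val2 (map blank cs) = (\<lambda>_. {})"
  "i < length cs \<Longrightarrow> lets (map blank cs) i = cs ! i"
  by (auto simp: has1_def val1_def val2_def lets_def blank_def fun_eq_iff)

lemma colw_len: "length (map (col w) [0..<padlen w]) = padlen w" by simp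

theorem def_imp_rec:
  fixes I :: "'r \<Rightarrow> 'a list set" and \<psi> :: "'r mso"
  assumes n1: "n \<ge> 1" and ok: "mso_ok L ar n \<psi>" and sent: "mso_sentence \<psi>"
  shows "\<exists>Q E I0 T. is_automaton L ar n Q E I0 T \<and> (\<forall>w::'a list list. aut_accepts I E I0 T w \<longleftrightarrow> mso_holds I w \<psi>)"
proof -
  define P :: "'r fo \<Rightarrow> (nat \<Rightarrow> 'a option) \<Rightarrow> bool" where "P = (\<lambda>F c. fo_sat I c F)"
  define LA where "LA = Lang P \<psi>"
  define L0 where "L0 = {cs. map blank cs \<in> LA}"
  have fv1: "mso_fv1 \<psi> = {}" using sent by (simp add: mso_sentence_def)
  obtain Fs where Fs: "set Fs = atoms \<psi>" using finite_atoms finite_list by blast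
  define tp where "tp = (\<lambda>c. map (\<lambda>F. P F c) Fs)"
  have L0_iff: "cs \<in> L0 \<longleftrightarrow> msat P (lets (map blank cs)) (length cs) (\<lambda>_. 0) (\<lambda>_. {}) \<psi>" for cs
    unfolding L0_def LA_def Lang_def using fv1 by (simp add: valid_def blank_facts)
  have holds: "mso_holds I w \<psi> \<longleftrightarrow> map (col w) [0..<padlen w] \<in> L0" for w
  proof -
    have "mso_holds I w \<psi> = msat P (col w) (padlen w) (\<lambda>_. 0) (\<lambda>_. {}) \<psi>"
      unfolding mso_holds_def mso_sat_msat P_def ..
    also have "\<dots> = msat P (lets (map blank (map (col w) [0..<padlen w]))) (padlen w) (\<lambda>_. 0) (\<lambda>_. {}) \<psi>"
      by (rule msat_cong) (auto simp: fv1 lets_def blank_def)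
    finally show ?thesis using L0_iff by simp
  qed
  have inv: "cs \<in> L0 \<longleftrightarrow> cs' \<in> L0" if "length cs = length cs'" "\<forall>i<length cs. tp (cs!i) = tp (cs'!i)" for cs cs'
  proof -
    have "msat P (lets (map blank cs)) (length cs) (\<lambda>_. 0) (\<lambda>_. {}) \<psi> = msat P (lets (map blank cs')) (length cs) (\<lambda>_. 0) (\<lambda>_. {}) \<psi>"
    proof (rule msat_cong)
      show "\<forall>i<length cs. \<forall>F\<in>atoms \<psi>. P F (lets (map blank cs) i) = P F (lets (map blank cs') i)"
      proof (intro allI impI ballI)
        fix i F assume i: "i < length cs" and F: "F \<in> atoms \<psi>"
        have "tp (cs!i) = tp (cs'!i)" using that i by blast
        then have "P F (cs!i) = P F (cs'!i)" using F Fs unfolding tp_def by (auto simp: map_eq_conv)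
        then show "P F (lets (map blank cs) i) = P F (lets (map blank cs') i)"
          using i that(1) by (simp add: blank_facts)
      qed
    qed (simp add: fv1)
    then show ?thesis using L0_iff that(1) by simp
  qed
  have inv1: "v @ c # x \<in> L0 \<longleftrightarrow> v @ c' # x \<in> L0" if "tp c = tp c'" for v c c' x
    by (rule inv) (auto simp: nth_append nth_Cons' that)
  have quot_snoc: "quot [c] (quot v L0) = quot (v @ [c]) L0" for v c
    by (simp add: quot_def)
  have quot_tp: "quot [c] (quot v L0) = quot [c'] (quot v L0)" if "tp c = tp c'" for v c c'
    using inv1[OF that, of v] by (auto simp: quot_def)
  define Qs where "Qs = range (\<lambda>v. quot v L0)"
  have fQs: "finite Qs"
  proof -
    have "Qs \<subseteq> (\<lambda>M. {v. map blank v \<in> M}) ` range (\<lambda>u. quot u LA)"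
      unfolding Qs_def L0_def quot_def by auto
    moreover have "finite (range (\<lambda>u. quot u LA))" using fq_Lang[of P \<psi>] unfolding LA_def fq_def .
    ultimately show ?thesis by (rule finite_subset[OF _ finite_imageI])
  qed
  obtain f :: "_ \<Rightarrow> nat" and N where f: "f ` Qs = {i. i < N}" "inj_on f Qs"
    using finite_imp_inj_to_nat_seg[OF fQs] by blast
  define Ts where "Ts = range tp"
  have fTs: "finite Ts"
  proof -
    have "Ts \<subseteq> {t. set t \<subseteq> UNIV \<and> length t = length Fs}" unfolding Ts_def tp_def by auto
    then show ?thesis by (rule finite_subset) (rule finite_lists_length_eq, simp)
  qed
  define pick where "pick = (\<lambda>t. SOME c. tp c = t)"
  have pick: "t \<in> Ts \<Longrightarrow> tp (pick t) = t" for t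
  proof -
    assume "t \<in> Ts" then obtain c where "t = tp c" unfolding Ts_def by blast
    then show "tp (pick t) = t" unfolding pick_def by (metis (mono_tags) someI_ex)
  qed
  have lenTs: "t \<in> Ts \<Longrightarrow> length t = length Fs" for t unfolding Ts_def tp_def by auto
  define E where "E = (\<lambda>(q,t). (f q, tau Fs t, f (quot [pick t] q))) ` (Qs \<times> Ts)"
  define I0 where "I0 = {f L0}"
  define T where "T = f ` {q \<in> Qs. [] \<in> q}"
  have L0Qs: "L0 \<in> Qs" unfolding Qs_def by (rule range_eqI[of _ _ "[]"]) (simp add: quot_def)
  have qQs: "quot v L0 \<in> Qs" for v unfolding Qs_def by simp
  have stepQs: "q \<in> Qs \<Longrightarrow> quot [c] q \<in> Qs" for q c
    unfolding Qs_def using quot_snoc by auto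
  have Fs_ok: "\<forall>F\<in>set Fs. fo_formula_n L ar n F" using Fs mso_ok_atoms[OF ok] by auto
  have aut: "is_automaton L ar n (f ` Qs) E I0 T"
    unfolding is_automaton_def
  proof (intro conjI)
    show "finite (f ` Qs)" using fQs by simp
    show "I0 \<subseteq> f ` Qs" unfolding I0_def using L0Qs by simp
    show "T \<subseteq> f ` Qs" unfolding T_def by auto
    show "finite E" unfolding E_def using fQs fTs by simp
    show "E \<subseteq> f ` Qs \<times> {\<phi>. fo_formula_n L ar n \<phi>} \<times> f ` Qs"
      unfolding E_def using stepQs tau_wf[OF Fs_ok n1] by auto
  qed
  have acc: "aut_accepts I E I0 T w \<longleftrightarrow> mso_holds I w \<psi>" for w
  proof -
    define cs where "cs = map (col w) [0..<padlen w]"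
    define m where "m = padlen w"
    have lcs: "length cs = m" unfolding cs_def m_def by simp
    have ncs: "i < m \<Longrightarrow> cs ! i = col w i" for i unfolding cs_def m_def by simp
    have tk: "i < m \<Longrightarrow> take (Suc i) cs = take i cs @ [col w i]" for i
      using take_Suc_conv_app_nth[of i cs] lcs ncs by simp
    have tpsat: "fo_sat I c (tau Fs (tp c))" for c
      by (subst tau_sat) (simp_all add: tp_def P_def)
    show ?thesis
    proof
      assume "aut_accepts I E I0 T w"
      then obtain qs where q0: "qs 0 \<in> I0" and qm: "qs m \<in> T"
        and qstep: "\<forall>i<m. \<exists>\<phi>. (qs i, \<phi>, qs (Suc i)) \<in> E \<and> fo_sat I (col w i) \<phi>"
        unfolding aut_accepts_def m_def by blast
      have run: "i \<le> m \<Longrightarrow> qs i = f (quot (take i cs) L0)" for i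
      proof (induction i)
        case 0 then show ?case using q0 by (simp add: I0_def quot_def)
      next
        case (Suc i)
        then have im: "i < m" by simp
        then obtain \<phi> where e: "(qs i, \<phi>, qs (Suc i)) \<in> E" and s: "fo_sat I (col w i) \<phi>" using qstep by blast
        then obtain q t where qt: "q \<in> Qs" "t \<in> Ts" "qs i = f q" "\<phi> = tau Fs t" "qs (Suc i) = f (quot [pick t] q)"
          unfolding E_def by auto
        have "f q = f (quot (take i cs) L0)" using Suc.IH im qt(3) by simp
        then have qq: "q = quot (take i cs) L0" using f(2) qt(1) qQs by (auto dest: inj_onD)
        have st: "fo_sat I (col w i) (tau Fs t)" using s qt(4) by simp
        have "map (\<lambda>F. fo_sat I (col w i) F) Fs = t"
          using tau_sat[OF lenTs[OF qt(2)], of I "col w i"] st by simp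
        then have "tp (col w i) = t" unfolding tp_def P_def by simp
        then have "tp (pick t) = tp (col w i)" using pick[OF qt(2)] by simp
        then have "quot [pick t] q = quot (take (Suc i) cs) L0"
          using quot_tp[of "pick t" "col w i" "take i cs"] quot_snoc tk[OF im] qq by simp
        then show ?case using qt(5) by simp
      qed
      have "qs m = f (quot cs L0)" using run[of m] lcs by simp
      then obtain q where "q \<in> Qs" "[] \<in> q" "f q = f (quot cs L0)" using qm unfolding T_def by auto
      then have "q = quot cs L0" using f(2) qQs by (auto dest: inj_onD)
      then have "cs \<in> L0" using \<open>[] \<in> q\<close> by (simp add: quot_def)
      then show "mso_holds I w \<psi>" using holds cs_def by simp
    next
      assume "mso_holds I w \<psi>"
      then have csL: "cs \<in> L0" using holds cs_def by simp
      define qs where "qs = (\<lambda>i. f (quot (take i cs) L0))"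
      have "qs 0 \<in> I0" unfolding qs_def I0_def by (simp add: quot_def)
      moreover have "qs m \<in> T" unfolding qs_def T_def using lcs csL qQs by (auto simp: quot_def)
      moreover have "\<forall>i<m. \<exists>\<phi>. (qs i, \<phi>, qs (Suc i)) \<in> E \<and> fo_sat I (col w i) \<phi>"
      proof (intro allI impI)
        fix i assume im: "i < m"
        let ?q = "quot (take i cs) L0" and ?t = "tp (col w i)"
        have tT: "?t \<in> Ts" unfolding Ts_def by simp
        have "quot [pick ?t] ?q = quot (take (Suc i) cs) L0"
          using quot_tp[of "pick ?t" "col w i" "take i cs"] pick[OF tT] quot_snoc tk[OF im] by simp
        then have "(qs i, tau Fs ?t, qs (Suc i)) \<in> E"
          unfolding E_def qs_def using qQs tT by (auto intro!: image_eqI[of _ _ "(?q, ?t)"])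
        then show "\<exists>\<phi>. (qs i, \<phi>, qs (Suc i)) \<in> E \<and> fo_sat I (col w i) \<phi>" using tpsat by blast
      qed
      ultimately show "aut_accepts I E I0 T w" unfolding aut_accepts_def m_def by blast
    qed
  qed
  show ?thesis using aut acc by blast
qed



definition MTrue :: "'r mso" where "MTrue = MNeg (MEx1 0 (MLess 0 0))"
definition MFalse :: "'r mso" where "MFalse = MNeg MTrue"
definition mdisj :: "'r mso \<Rightarrow> 'r mso \<Rightarrow> 'r mso" where "mdisj a b = MNeg (MConj (MNeg a) (MNeg b))"
definition mimp :: "'r mso \<Rightarrow> 'r mso \<Rightarrow> 'r mso" where "mimp a b = MNeg (MConj a (MNeg b))"
definition mall1 :: "nat \<Rightarrow> 'r mso \<Rightarrow> 'r mso" where "mall1 x a = MNeg (MEx1 x (MNeg a))"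
definition conjs :: "'r mso list \<Rightarrow> 'r mso" where "conjs xs = foldr MConj xs MTrue"
definition disjs :: "'r mso list \<Rightarrow> 'r mso" where "disjs xs = foldr mdisj xs MFalse"
definition exs2 :: "nat list \<Rightarrow> 'r mso \<Rightarrow> 'r mso" where "exs2 ks \<psi> = foldr MEx2 ks \<psi>"

lemma sat_basic[simp]:
  "mso_sat I w v1 v2 MTrue" "\<not> mso_sat I w v1 v2 MFalse"
  "mso_sat I w v1 v2 (mdisj a b) \<longleftrightarrow> mso_sat I w v1 v2 a \<or> mso_sat I w v1 v2 b"
  "mso_sat I w v1 v2 (mimp a b) \<longleftrightarrow> (mso_sat I w v1 v2 a \<longrightarrow> mso_sat I w v1 v2 b)"
  "mso_sat I w v1 v2 (mall1 x a) \<longleftrightarrow> (\<forall>p<padlen w. mso_sat I w (v1(x := p)) v2 a)"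
  by (auto simp: MTrue_def MFalse_def mdisj_def mimp_def mall1_def)

lemma sat_conjs[simp]: "mso_sat I w v1 v2 (conjs xs) \<longleftrightarrow> (\<forall>a\<in>set xs. mso_sat I w v1 v2 a)"
  by (induction xs) (auto simp: conjs_def)

lemma sat_disjs[simp]: "mso_sat I w v1 v2 (disjs xs) \<longleftrightarrow> (\<exists>a\<in>set xs. mso_sat I w v1 v2 a)"
  by (induction xs) (auto simp: disjs_def)

lemma fv_basic[simp]:
  "mso_fv1 MTrue = {}" "mso_fv2 MTrue = {}" "mso_fv1 MFalse = {}" "mso_fv2 MFalse = {}"
  "mso_fv1 (mdisj a b) = mso_fv1 a \<union> mso_fv1 b" "mso_fv2 (mdisj a b) = mso_fv2 a \<union> mso_fv2 b"
  "mso_fv1 (mimp a b) = mso_fv1 a \<union> mso_fv1 b" "mso_fv2 (mimp a b) = mso_fv2 a \<union> mso_fv2 b"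
  "mso_fv1 (mall1 x a) = mso_fv1 a - {x}" "mso_fv2 (mall1 x a) = mso_fv2 a"
  "mso_ok L ar n MTrue" "mso_ok L ar n MFalse"
  "mso_ok L ar n (mdisj a b) = (mso_ok L ar n a \<and> mso_ok L ar n b)"
  "mso_ok L ar n (mimp a b) = (mso_ok L ar n a \<and> mso_ok L ar n b)"
  "mso_ok L ar n (mall1 x a) = mso_ok L ar n a"
  by (auto simp: MTrue_def MFalse_def mdisj_def mimp_def mall1_def)

lemma fv_conjs[simp]:
  "mso_fv1 (conjs xs) = (\<Union>a\<in>set xs. mso_fv1 a)" "mso_fv2 (conjs xs) = (\<Union>a\<in>set xs. mso_fv2 a)"
  "mso_ok L ar n (conjs xs) = (\<forall>a\<in>set xs. mso_ok L ar n a)"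
  by (induction xs) (auto simp: conjs_def)

lemma fv_disjs[simp]:
  "mso_fv1 (disjs xs) = (\<Union>a\<in>set xs. mso_fv1 a)" "mso_fv2 (disjs xs) = (\<Union>a\<in>set xs. mso_fv2 a)"
  "mso_ok L ar n (disjs xs) = (\<forall>a\<in>set xs. mso_ok L ar n a)"
  by (induction xs) (auto simp: disjs_def)

lemma fv_exs2[simp]:
  "mso_fv1 (exs2 ks \<psi>) = mso_fv1 \<psi>" "mso_fv2 (exs2 ks \<psi>) = mso_fv2 \<psi> - set ks"
  "mso_ok L ar n (exs2 ks \<psi>) = mso_ok L ar n \<psi>"
  by (induction ks) (auto simp: exs2_def)

lemma sat_exs2: "mso_sat I w v1 v2 (exs2 ks \<psi>) \<longleftrightarrow>
  (\<exists>V. (\<forall>k\<in>set ks. V k \<subseteq> {..<padlen w}) \<and> mso_sat I w v1 (\<lambda>k. if k \<in> set ks then V k else v2 k) \<psi>)"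
proof (induction ks arbitrary: v2)
  case Nil
  then show ?case by (simp add: exs2_def)
next
  case (Cons k ks)
  have e: "mso_sat I w v1 v2 (exs2 (k # ks) \<psi>) \<longleftrightarrow> (\<exists>S \<subseteq> {..<padlen w}. mso_sat I w v1 (v2(k := S)) (exs2 ks \<psi>))"
    by (simp add: exs2_def)
  show ?case
  proof
    assume "mso_sat I w v1 v2 (exs2 (k # ks) \<psi>)"
    then obtain S V where S: "S \<subseteq> {..<padlen w}" "\<forall>j\<in>set ks. V j \<subseteq> {..<padlen w}"
      "mso_sat I w v1 (\<lambda>j. if j \<in> set ks then V j else (v2(k := S)) j) \<psi>"
      unfolding e Cons.IH by blast
    define V' where "V' = (\<lambda>j. if j \<in> set ks then V j else S)"
    have "(\<lambda>j. if j \<in> set ks then V j else (v2(k := S)) j) = (\<lambda>j. if j \<in> set (k # ks) then V' j else v2 j)"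
      by (auto simp: V'_def fun_eq_iff)
    moreover have "\<forall>j\<in>set (k # ks). V' j \<subseteq> {..<padlen w}" using S by (auto simp: V'_def)
    ultimately show "\<exists>V. (\<forall>j\<in>set (k # ks). V j \<subseteq> {..<padlen w}) \<and> mso_sat I w v1 (\<lambda>j. if j \<in> set (k # ks) then V j else v2 j) \<psi>"
      using S(3) by metis
  next
    assume "\<exists>V. (\<forall>j\<in>set (k # ks). V j \<subseteq> {..<padlen w}) \<and> mso_sat I w v1 (\<lambda>j. if j \<in> set (k # ks) then V j else v2 j) \<psi>"
    then obtain V where V: "\<forall>j\<in>set (k # ks). V j \<subseteq> {..<padlen w}"
      "mso_sat I w v1 (\<lambda>j. if j \<in> set (k # ks) then V j else v2 j) \<psi>" by blast
    have "(\<lambda>j. if j \<in> set (k # ks) then V j else v2 j) = (\<lambda>j. if j \<in> set ks then V j else (v2(k := V k)) j)"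
      by (auto simp: fun_eq_iff)
    then have "mso_sat I w v1 (v2(k := V k)) (exs2 ks \<psi>)" unfolding Cons.IH using V by auto
    then show "mso_sat I w v1 v2 (exs2 (k # ks) \<psi>)" unfolding e using V(1) by auto
  qed
qed



definition gF :: "'r fo \<Rightarrow> 'r fo" where "gF \<phi> = FConj \<phi> (FEq 0 0)"

definition msucc :: "'r mso" where
  "msucc = MConj (MLess 0 1) (MNeg (MEx1 2 (MConj (MLess 0 2) (MLess 2 1))))"

definition Body :: "(nat \<times> 'r fo \<times> nat) list \<Rightarrow> nat set \<Rightarrow> nat set \<Rightarrow> 'r mso" where
  "Body es I0 T = conjs [
     mall1 0 (disjs (map (\<lambda>k. MMem 0 k) [0..<length es])),
     mall1 0 (conjs (map (\<lambda>k. mimp (MMem 0 k) (MAlpha (gF (fst (snd (es!k)))) 0)) [0..<length es])),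
     mall1 0 (mall1 1 (mimp msucc (conjs (map (\<lambda>kk. MNeg (MConj (MMem 0 (fst kk)) (MMem 1 (snd kk))))
        (filter (\<lambda>kk. snd (snd (es!(fst kk))) \<noteq> fst (es!(snd kk))) (List.product [0..<length es] [0..<length es])))))),
     mall1 0 (mimp (MNeg (MEx1 1 (MLess 1 0))) (conjs (map (\<lambda>k. MNeg (MMem 0 k)) (filter (\<lambda>k. fst (es!k) \<notin> I0) [0..<length es])))),
     mall1 0 (mimp (MNeg (MEx1 1 (MLess 0 1))) (conjs (map (\<lambda>k. MNeg (MMem 0 k)) (filter (\<lambda>k. snd (snd (es!k)) \<notin> T) [0..<length es]))))]"

definition Phi :: "(nat \<times> 'r fo \<times> nat) list \<Rightarrow> nat set \<Rightarrow> nat set \<Rightarrow> 'r mso" where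
  "Phi es I0 T = mdisj (MConj (MNeg (MEx1 0 (MEq 0 0))) (if I0 \<inter> T \<noteq> {} then MTrue else MFalse))
      (MConj (MEx1 0 (MEq 0 0)) (exs2 [0..<length es] (Body es I0 T)))"

lemma Phi_sentence: "mso_sentence (Phi es I0 T)"
proof -
  have a: "mso_fv1 (Body es I0 T) = {}"
    unfolding Body_def msucc_def by auto
  have "mso_fv2 (Body es I0 T) \<subseteq> {..<length es}"
    unfolding Body_def msucc_def by auto
  then show ?thesis unfolding mso_sentence_def Phi_def by (simp add: a atLeast0LessThan)
qed

lemma Phi_ok: assumes "\<forall>e\<in>set es. fo_formula_n L ar n (fst (snd e))" "n \<ge> 1"
  shows "mso_ok L ar n (Phi es I0 T)"
proof -
  have "mso_ok L ar n (MAlpha (gF (fst (snd (es!k)))) 0)" if "k < length es" for k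
    using assms that nth_mem[OF that] by (auto simp: gF_def fo_formula_n_def)
  then have "mso_ok L ar n (Body es I0 T)" unfolding Body_def msucc_def by simp
  then show ?thesis unfolding Phi_def by simp
qed

lemma succ_iff: assumes "p' < (m::nat)" shows "(p < p' \<and> \<not> (\<exists>r<m. p < r \<and> r < p')) \<longleftrightarrow> p' = Suc p"
proof
  assume H: "p < p' \<and> \<not> (\<exists>r<m. p < r \<and> r < p')"
  then have "\<not> Suc p < p'" using assms by (meson less_trans lessI)
  then show "p' = Suc p" using H by linarith
next
  assume "p' = Suc p" then show "p < p' \<and> \<not> (\<exists>r<m. p < r \<and> r < p')" by auto
qed

lemma last_iff: assumes "p < (m::nat)" shows "(\<not> (\<exists>r<m. p < r)) \<longleftrightarrow> p = m - 1"
proof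
  assume H: "\<not> (\<exists>r<m. p < r)"
  then have "\<not> Suc p < m" by blast
  then show "p = m - 1" using assms by linarith
next
  assume "p = m - 1" then show "\<not> (\<exists>r<m. p < r)" by linarith
qed

lemma first_iff: "p < (m::nat) \<Longrightarrow> (\<not> (\<exists>r<m. r < p)) \<longleftrightarrow> p = 0" by auto

lemma Body_sem:
  fixes w :: "'a list list"
  defines "m \<equiv> padlen w"
  shows "mso_sat I w v1 W (Body es I0 T) \<longleftrightarrow>
    (\<forall>p<m. \<exists>k<length es. p \<in> W k) \<and>
    (\<forall>p<m. \<forall>k<length es. p \<in> W k \<longrightarrow> fo_sat I (col w p) (fst (snd (es!k)))) \<and>
    (\<forall>p. Suc p < m \<longrightarrow> (\<forall>k<length es. \<forall>k'<length es. p \<in> W k \<and> Suc p \<in> W k' \<longrightarrow> snd (snd (es!k)) = fst (es!k'))) \<and>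
    (0 < m \<longrightarrow> (\<forall>k<length es. 0 \<in> W k \<longrightarrow> fst (es!k) \<in> I0)) \<and>
    (0 < m \<longrightarrow> (\<forall>k<length es. m - 1 \<in> W k \<longrightarrow> snd (snd (es!k)) \<in> T))"
proof -
  let ?K = "length es"
  have c1: "mso_sat I w v1 W (mall1 0 (disjs (map (\<lambda>k. MMem 0 k) [0..<?K]))) \<longleftrightarrow> (\<forall>p<m. \<exists>k<?K. p \<in> W k)"
    by (auto simp: m_def atLeast0LessThan)
  have c2: "mso_sat I w v1 W (mall1 0 (conjs (map (\<lambda>k. mimp (MMem 0 k) (MAlpha (gF (fst (snd (es!k)))) 0)) [0..<?K])))
     \<longleftrightarrow> (\<forall>p<m. \<forall>k<?K. p \<in> W k \<longrightarrow> fo_sat I (col w p) (fst (snd (es!k))))"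
    by (auto simp: m_def gF_def atLeast0LessThan)
  have c3: "mso_sat I w v1 W (mall1 0 (mall1 1 (mimp msucc (conjs (map (\<lambda>kk. MNeg (MConj (MMem 0 (fst kk)) (MMem 1 (snd kk))))
        (filter (\<lambda>kk. snd (snd (es!(fst kk))) \<noteq> fst (es!(snd kk))) (List.product [0..<?K] [0..<?K])))))))
     \<longleftrightarrow> (\<forall>p. Suc p < m \<longrightarrow> (\<forall>k<?K. \<forall>k'<?K. p \<in> W k \<and> Suc p \<in> W k' \<longrightarrow> snd (snd (es!k)) = fst (es!k')))"
  proof -
    have s: "mso_sat I w (v1(0 := p, 1 := p')) W msucc \<longleftrightarrow> p' = Suc p" if "p' < m" for p p'
      using succ_iff[OF that, of p] by (simp add: msucc_def m_def)
    show ?thesis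
    proof
      assume A: "mso_sat I w v1 W (mall1 0 (mall1 1 (mimp msucc (conjs (map (\<lambda>kk. MNeg (MConj (MMem 0 (fst kk)) (MMem 1 (snd kk))))
        (filter (\<lambda>kk. snd (snd (es!(fst kk))) \<noteq> fst (es!(snd kk))) (List.product [0..<?K] [0..<?K])))))))"
      show "\<forall>p. Suc p < m \<longrightarrow> (\<forall>k<?K. \<forall>k'<?K. p \<in> W k \<and> Suc p \<in> W k' \<longrightarrow> snd (snd (es!k)) = fst (es!k'))"
      proof -
        have "snd (snd (es!k)) = fst (es!k')"
          if "Suc p < m" "k < ?K" "k' < ?K" "p \<in> W k" "Suc p \<in> W k'" for p k k'
        proof (rule ccontr)
          assume ne: "snd (snd (es!k)) \<noteq> fst (es!k')"
          have pm: "p < padlen w" "Suc p < padlen w" using that(1) unfolding m_def by simp_all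
          have "mso_sat I w (v1(0 := p, 1 := Suc p)) W msucc" using s[of "Suc p" p] that(1) by simp
          then have "mso_sat I w (v1(0 := p, 1 := Suc p)) W (conjs (map (\<lambda>kk. MNeg (MConj (MMem 0 (fst kk)) (MMem 1 (snd kk))))
             (filter (\<lambda>kk. snd (snd (es!(fst kk))) \<noteq> fst (es!(snd kk))) (List.product [0..<?K] [0..<?K]))))"
            using A pm \<open>mso_sat I w (v1(0 := p, 1 := Suc p)) W msucc\<close> unfolding sat_basic by blast
          then show False using ne that by (auto simp: atLeast0LessThan)
        qed
        then show ?thesis by blast
      qed
    next
      assume B: "\<forall>p. Suc p < m \<longrightarrow> (\<forall>k<?K. \<forall>k'<?K. p \<in> W k \<and> Suc p \<in> W k' \<longrightarrow> snd (snd (es!k)) = fst (es!k'))"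
      show "mso_sat I w v1 W (mall1 0 (mall1 1 (mimp msucc (conjs (map (\<lambda>kk. MNeg (MConj (MMem 0 (fst kk)) (MMem 1 (snd kk))))
        (filter (\<lambda>kk. snd (snd (es!(fst kk))) \<noteq> fst (es!(snd kk))) (List.product [0..<?K] [0..<?K])))))))"
        unfolding sat_basic
      proof (intro allI impI)
        fix p p' assume "p < padlen w" "p' < padlen w"
        assume "mso_sat I w (v1(0 := p, 1 := p')) W msucc"
        then have "p' = Suc p" using s \<open>p' < padlen w\<close> m_def by blast
        then show "mso_sat I w (v1(0 := p, 1 := p')) W (conjs (map (\<lambda>kk. MNeg (MConj (MMem 0 (fst kk)) (MMem 1 (snd kk))))
        (filter (\<lambda>kk. snd (snd (es!(fst kk))) \<noteq> fst (es!(snd kk))) (List.product [0..<?K] [0..<?K]))))"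
          using B \<open>p' < padlen w\<close> unfolding m_def by (auto simp: atLeast0LessThan)
      qed
    qed
  qed
  have c4: "mso_sat I w v1 W (mall1 0 (mimp (MNeg (MEx1 1 (MLess 1 0))) (conjs (map (\<lambda>k. MNeg (MMem 0 k)) (filter (\<lambda>k. fst (es!k) \<notin> I0) [0..<?K])))))
     \<longleftrightarrow> (0 < m \<longrightarrow> (\<forall>k<?K. 0 \<in> W k \<longrightarrow> fst (es!k) \<in> I0))"
    using first_iff[of _ m] by (auto simp: m_def[symmetric] atLeast0LessThan)
  have c5: "mso_sat I w v1 W (mall1 0 (mimp (MNeg (MEx1 1 (MLess 0 1))) (conjs (map (\<lambda>k. MNeg (MMem 0 k)) (filter (\<lambda>k. snd (snd (es!k)) \<notin> T) [0..<?K])))))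
     \<longleftrightarrow> (0 < m \<longrightarrow> (\<forall>k<?K. m - 1 \<in> W k \<longrightarrow> snd (snd (es!k)) \<in> T))"
    using last_iff[of _ m] by (auto simp: m_def[symmetric] atLeast0LessThan)
  show ?thesis unfolding Body_def sat_conjs using c1 c2 c3 c4 c5 by simp
qed



theorem rec_imp_def:
  fixes I :: "'r \<Rightarrow> 'a list set"
  assumes n1: "n \<ge> 1" and aut: "is_automaton L ar n Q E I0 T"
  shows "\<exists>\<psi>. mso_ok L ar n \<psi> \<and> mso_sentence \<psi> \<and> (\<forall>w::'a list list. mso_holds I w \<psi> \<longleftrightarrow> aut_accepts I E I0 T w)"
proof -
  have finE: "finite E" and Esub: "E \<subseteq> Q \<times> {\<phi>. fo_formula_n L ar n \<phi>} \<times> Q"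
    using aut by (auto simp: is_automaton_def)
  obtain es where es: "set es = E" using finite_list[OF finE] by blast
  define K where "K = length es"
  have esok: "\<forall>e\<in>set es. fo_formula_n L ar n (fst (snd e))" using es Esub by auto
  let ?src = "\<lambda>k. fst (es!k)" and ?lab = "\<lambda>k. fst (snd (es!k))" and ?tgt = "\<lambda>k. snd (snd (es!k))"
  have sem: "mso_holds I w (Phi es I0 T) \<longleftrightarrow> aut_accepts I E I0 T w" for w :: "'a list list"
  proof -
    define m where "m = padlen w"
    define conds where "conds = (\<lambda>W.
      (\<forall>p<m. \<exists>k<K. p \<in> W k) \<and>
      (\<forall>p<m. \<forall>k<K. p \<in> W k \<longrightarrow> fo_sat I (col w p) (?lab k)) \<and>
      (\<forall>p. Suc p < m \<longrightarrow> (\<forall>k<K. \<forall>k'<K. p \<in> W k \<and> Suc p \<in> W k' \<longrightarrow> ?tgt k = ?src k')) \<and>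
      (0 < m \<longrightarrow> (\<forall>k<K. 0 \<in> W k \<longrightarrow> ?src k \<in> I0)) \<and>
      (0 < m \<longrightarrow> (\<forall>k<K. m - 1 \<in> W k \<longrightarrow> ?tgt k \<in> T)))"
    have bs: "mso_sat I w v1 W (Body es I0 T) \<longleftrightarrow> conds W" for v1 W
      unfolding conds_def K_def m_def by (rule Body_sem)
    have h: "mso_holds I w (Phi es I0 T) \<longleftrightarrow>
      (m = 0 \<and> I0 \<inter> T \<noteq> {}) \<or> (0 < m \<and> (\<exists>V. (\<forall>k\<in>set [0..<K]. V k \<subseteq> {..<m}) \<and>
          conds (\<lambda>k. if k \<in> set [0..<K] then V k else {})))"
    proof -
      have e: "mso_sat I w (\<lambda>_. 0) (\<lambda>_. {}) (exs2 [0..<K] (Body es I0 T)) \<longleftrightarrow>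
        (\<exists>V. (\<forall>k\<in>set [0..<K]. V k \<subseteq> {..<m}) \<and> conds (\<lambda>k. if k \<in> set [0..<K] then V k else {}))"
        unfolding sat_exs2 bs m_def ..
      have "mso_holds I w (Phi es I0 T) \<longleftrightarrow> (m = 0 \<and> I0 \<inter> T \<noteq> {}) \<or>
          (0 < m \<and> mso_sat I w (\<lambda>_. 0) (\<lambda>_. {}) (exs2 [0..<K] (Body es I0 T)))"
        by (auto simp: mso_holds_def Phi_def K_def m_def)
      then show ?thesis using e by simp
    qed
    show ?thesis
    proof (cases "m = 0")
      case True
      have "aut_accepts I E I0 T w \<longleftrightarrow> (\<exists>qs::nat\<Rightarrow>nat. qs 0 \<in> I0 \<and> qs 0 \<in> T)"
        unfolding aut_accepts_def using True m_def by simp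
      also have "\<dots> \<longleftrightarrow> I0 \<inter> T \<noteq> {}"
      proof
        assume "\<exists>qs::nat\<Rightarrow>nat. qs 0 \<in> I0 \<and> qs 0 \<in> T" then show "I0 \<inter> T \<noteq> {}" by blast
      next
        assume "I0 \<inter> T \<noteq> {}" then obtain q where "q \<in> I0" "q \<in> T" by blast
        then show "\<exists>qs::nat\<Rightarrow>nat. qs 0 \<in> I0 \<and> qs 0 \<in> T" by (intro exI[of _ "\<lambda>_. q"]) simp
      qed
      finally show ?thesis using h True by simp
    next
      case False
      then have m0: "0 < m" by simp
      have B: "aut_accepts I E I0 T w" if c: "conds W" for W
      proof -
        define kk where "kk = (\<lambda>p. SOME k. k < K \<and> p \<in> W k)"
        have kk: "kk p < K \<and> p \<in> W (kk p)" if "p < m" for p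
          using c that unfolding conds_def kk_def by (metis (mono_tags, lifting) someI_ex)
        define qs where "qs = (\<lambda>i. if i < m then ?src (kk i) else ?tgt (kk (m - 1)))"
        have "qs 0 \<in> I0" using c kk[of 0] m0 unfolding conds_def qs_def by auto
        moreover have "qs m \<in> T" using c kk[of "m - 1"] m0 unfolding conds_def qs_def by auto
        moreover have "\<forall>i<m. \<exists>\<phi>. (qs i, \<phi>, qs (Suc i)) \<in> E \<and> fo_sat I (col w i) \<phi>"
        proof (intro allI impI)
          fix i assume im: "i < m"
          have ki: "kk i < K" "i \<in> W (kk i)" using kk[OF im] by auto
          have inE: "es ! kk i \<in> E" using ki(1) es nth_mem unfolding K_def by blast
          have sat: "fo_sat I (col w i) (?lab (kk i))" using c im ki unfolding conds_def by blast
          have nxt: "qs (Suc i) = ?tgt (kk i)"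
          proof (cases "Suc i < m")
            case True
            have "?tgt (kk i) = ?src (kk (Suc i))"
              using c True ki kk[OF True] unfolding conds_def by blast
            then show ?thesis using True unfolding qs_def by simp
          next
            case False
            then have "i = m - 1" using im by simp
            then show ?thesis using False unfolding qs_def by simp
          qed
          have "(qs i, ?lab (kk i), qs (Suc i)) = es ! kk i" using nxt im unfolding qs_def by simp
          then show "\<exists>\<phi>. (qs i, \<phi>, qs (Suc i)) \<in> E \<and> fo_sat I (col w i) \<phi>" using inE sat by metis
        qed
        ultimately show ?thesis unfolding aut_accepts_def m_def by blast
      qed
      have C: "\<exists>W. (\<forall>k\<in>set [0..<K]. W k \<subseteq> {..<m}) \<and> (\<forall>k. k \<notin> set [0..<K] \<longrightarrow> W k = {}) \<and> conds W"
        if a: "aut_accepts I E I0 T w"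
      proof -
        obtain qs where q0: "qs 0 \<in> I0" and qm: "qs m \<in> T"
          and qstep: "\<forall>i<m. \<exists>\<phi>. (qs i, \<phi>, qs (Suc i)) \<in> E \<and> fo_sat I (col w i) \<phi>"
          using a unfolding aut_accepts_def m_def by blast
        define e where "e = (\<lambda>i. SOME e. e \<in> E \<and> fst e = qs i \<and> snd (snd e) = qs (Suc i) \<and> fo_sat I (col w i) (fst (snd e)))"
        have e: "e i \<in> E \<and> fst (e i) = qs i \<and> snd (snd (e i)) = qs (Suc i) \<and> fo_sat I (col w i) (fst (snd (e i)))"
          if im: "i < m" for i
        proof -
          obtain \<phi> where "(qs i, \<phi>, qs (Suc i)) \<in> E" "fo_sat I (col w i) \<phi>" using qstep im by blast
          then have "\<exists>e. e \<in> E \<and> fst e = qs i \<and> snd (snd e) = qs (Suc i) \<and> fo_sat I (col w i) (fst (snd e))"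
            by (intro exI[of _ "(qs i, \<phi>, qs (Suc i))"]) simp
          then show ?thesis unfolding e_def by (rule someI_ex)
        qed
        define kk where "kk = (\<lambda>i. SOME k. k < K \<and> es ! k = e i)"
        have kk: "kk i < K \<and> es ! kk i = e i" if "i < m" for i
        proof -
          have "e i \<in> set es" using e[OF that] es by simp
          then have "\<exists>k. k < K \<and> es ! k = e i" unfolding K_def by (simp add: in_set_conv_nth)
          then show ?thesis unfolding kk_def by (rule someI_ex)
        qed
        define W where "W = (\<lambda>k. {i. i < m \<and> kk i = k})"
        have "conds W" unfolding conds_def
        proof (intro conjI allI impI)
          fix p assume "p < m" then show "\<exists>k<K. p \<in> W k" using kk unfolding W_def by blast
        next
          fix p k assume "p < m" "k < K" "p \<in> W k"
          then show "fo_sat I (col w p) (?lab k)" using e kk unfolding W_def by auto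
        next
          fix p k k' assume "Suc p < m" "k < K" "k' < K" "p \<in> W k \<and> Suc p \<in> W k'"
          then have "kk p = k" "kk (Suc p) = k'" "p < m" unfolding W_def by auto
          then show "?tgt k = ?src k'" using e[of p] e[of "Suc p"] kk[of p] kk[of "Suc p"] \<open>Suc p < m\<close> by auto
        next
          fix k assume "0 < m" "k < K" "0 \<in> W k"
          then show "?src k \<in> I0" using e[of 0] kk[of 0] q0 unfolding W_def by auto
        next
          fix k assume "0 < m" "k < K" "m - 1 \<in> W k"
          then have "kk (m - 1) = k" unfolding W_def by auto
          then show "?tgt k \<in> T" using e[of "m - 1"] kk[of "m - 1"] qm m0 by auto
        qed
        moreover have "\<forall>k\<in>set [0..<K]. W k \<subseteq> {..<m}" unfolding W_def by auto
        moreover have "\<forall>k. k \<notin> set [0..<K] \<longrightarrow> W k = {}" unfolding W_def using kk by auto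
        ultimately show ?thesis by blast
      qed
      show ?thesis
      proof
        assume "mso_holds I w (Phi es I0 T)"
        then obtain V where "conds (\<lambda>k. if k \<in> set [0..<K] then V k else {})" using h m0 by auto
        then show "aut_accepts I E I0 T w" by (rule B)
      next
        assume "aut_accepts I E I0 T w"
        then obtain W where W: "\<forall>k\<in>set [0..<K]. W k \<subseteq> {..<m}" "\<forall>k. k \<notin> set [0..<K] \<longrightarrow> W k = {}" "conds W"
          using C by blast
        have "(\<lambda>k. if k \<in> set [0..<K] then W k else {}) = W" using W(2) by (auto simp: fun_eq_iff)
        then show "mso_holds I w (Phi es I0 T)" using h m0 W by metis
      qed
    qed
  qed
  show ?thesis using Phi_ok[OF esok n1] Phi_sentence sem by blast
qed


theorem proposition3p4:
  fixes L :: "'r set" and ar :: "'r \<Rightarrow> nat" and I :: "'r \<Rightarrow> 'a list set"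
    and n :: nat and R :: "'a list list set"
  assumes "is_structure L ar I"
    and "n \<ge> 1"
    and "\<forall>w\<in>R. length w = n"
  shows "mso_definable L ar I n R \<longleftrightarrow> recognizable L ar I n R"
proof
  assume "mso_definable L ar I n R"
  then obtain \<psi> where ok: "mso_ok L ar n \<psi>" and se: "mso_sentence \<psi>"
    and d: "\<forall>w. length w = n \<longrightarrow> (w \<in> R \<longleftrightarrow> mso_holds I w \<psi>)"
    unfolding mso_definable_def by blast
  obtain Q E I0 T where aut: "is_automaton L ar n Q E I0 T"
    and acc: "\<forall>w::'a list list. aut_accepts I E I0 T w \<longleftrightarrow> mso_holds I w \<psi>"
    using def_imp_rec[OF assms(2) ok se, of I] by blast
  have "R = {w. length w = n \<and> aut_accepts I E I0 T w}"
    using d acc assms(3) by blast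
  then show "recognizable L ar I n R" unfolding recognizable_def using aut by blast
next
  assume "recognizable L ar I n R"
  then obtain Q E I0 T where aut: "is_automaton L ar n Q E I0 T"
    and R: "R = {w. length w = n \<and> aut_accepts I E I0 T w}"
    unfolding recognizable_def by blast
  obtain \<psi> where ok: "mso_ok L ar n \<psi>" and se: "mso_sentence \<psi>"
    and h: "\<forall>w::'a list list. mso_holds I w \<psi> \<longleftrightarrow> aut_accepts I E I0 T w"
    using rec_imp_def[OF assms(2) aut, of I] by blast
  have "\<forall>w. length w = n \<longrightarrow> (w \<in> R \<longleftrightarrow> mso_holds I w \<psi>)" using R h by blast
  then show "mso_definable L ar I n R" unfolding mso_definable_def using ok se by blast
qed

end
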